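(* Let $\alpha\ge1$, integers $k_1,k_2\ge0$, $n\ge1$, $k=k_1+k_2$. For every integer $i$ with $1\le i\le n$, $$\frac{k!}{k_1!\,k_2!}\,(k_1+n+1-i)^{\alpha(k_1+n+1-i)}\,(k_2+i)^{\alpha(k_2+i)}\ \le\ 4^{-(\alpha-1)\min(k_1+1,\,k_2+1)}\,(k+n+1)^{\alpha(k+n+1)}.$$
   Context: Convention $0^0=1$. *)

theory Defs
  imports Complex_Main
begin

end

theory Submission imports Defs begin

lemma key_ineq:
  fixes s t :: real
  assumes "0 < s" "s \<le> t"
  shows "s * ln s + t * ln t + s * ln 4 \<le> (s + t) * ln (s + t)"
proof -
  define h where "h x = (s + x) * ln (s + x) - x * ln x" for x
  have "h s \<le> h t"
  proof (rule DERIV_nonneg_imp_nondecreasing[OF assms(2)])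
    fix x assume x: "s \<le> x" "x \<le> t"
    hence xp: "x > 0" using assms by simp
    have "DERIV h x :> ln (s + x) - ln x"
    proof -
      have sx: "s + x > 0" "s + x \<noteq> 0" "x \<noteq> 0" using xp assms by auto
      show ?thesis unfolding h_def
        by (rule derivative_eq_intros refl | use sx xp in \<open>simp add: field_simps\<close>)+
    qed
    moreover have "ln x \<le> ln (s + x)" using xp assms by simp
    ultimately show "\<exists>y. DERIV h x :> y \<and> y \<ge> 0" using xp assms
      by (intro exI[of _ _]) (auto simp: field_simps)
  qed
  moreover have "ln (s + s) = ln 2 + ln s" using assms by (simp add: ln_mult)
  moreover have "ln (4::real) = 2 * ln 2"
    using ln_realpow[of 2 2] by simp
  ultimately show ?thesis unfolding h_def by (simp add: algebra_simps)
qed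

lemma binom_pow:
  fixes a b :: nat
  shows "((a + b) choose a) * a ^ a * b ^ b \<le> (a + b) ^ (a + b)"
proof -
  have "(a + b) ^ (a + b) = (\<Sum>j\<le>a+b. ((a+b) choose j) * a ^ j * b ^ (a + b - j))"
    using binomial_ring[of a b "a+b"] by simp
  moreover have "((a + b) choose a) * a ^ a * b ^ (a + b - a) \<le> (\<Sum>j\<le>a+b. ((a+b) choose j) * a ^ j * b ^ (a + b - j))"
    by (rule member_le_sum[where f = "\<lambda>j. ((a+b) choose j) * a ^ j * b ^ (a + b - j)"]) auto
  ultimately show ?thesis by simp
qed

lemma binom_mono2:
  fixes p q p' q' :: nat
  assumes "p \<le> p'" "q \<le> q'"
  shows "(p + q) choose p \<le> (p' + q') choose p'"
proof -
  have "(p + q) choose p \<le> (p + q') choose p" using assms by (intro binomial_right_mono) simp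
  also have "\<dots> = (p + q') choose q'" by (metis binomial_symmetric le_add2 add_diff_cancel_right')
  also have "\<dots> \<le> (p' + q') choose q'" using assms by (intro binomial_right_mono) simp
  also have "\<dots> = (p' + q') choose p'" by (metis binomial_symmetric le_add2 add_diff_cancel_right')
  finally show ?thesis .
qed
theorem corollaryA2:
  fixes \<alpha> :: real and k1 k2 n i :: nat
  assumes "\<alpha> \<ge> 1" and "n \<ge> 1" and "1 \<le> i" and "i \<le> n"
  shows "real (fact (k1 + k2)) / (real (fact k1) * real (fact k2))
           * real (k1 + n + 1 - i) powr (\<alpha> * real (k1 + n + 1 - i))
           * real (k2 + i) powr (\<alpha> * real (k2 + i))
         \<le> 4 powr (- (\<alpha> - 1) * real (min (k1 + 1) (k2 + 1)))
           * real (k1 + k2 + n + 1) powr (\<alpha> * real (k1 + k2 + n + 1))"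
proof -
  define a where "a = k1 + n + 1 - i"
  define b where "b = k2 + i"
  define m where "m = min (k1 + 1) (k2 + 1)"
  define C where "C = real ((k1 + k2) choose k1)"
  have ha: "k1 + 1 \<le> a" and hb: "k2 + 1 \<le> b" and hN: "k1 + k2 + n + 1 = a + b"
    using assms unfolding a_def b_def by auto
  have apos: "real a > 0" and bpos: "real b > 0" using ha hb by auto
  have Cfact: "real (fact (k1 + k2)) / (real (fact k1) * real (fact k2)) = C"
    unfolding C_def using binomial_fact[of k1 "k1+k2", where 'a=real] by simp
  have C1: "C \<ge> 1" unfolding C_def by (simp add: Suc_leI)
  have "(k1 + k2) choose k1 \<le> (a + b) choose a"
    using binom_mono2[of k1 a k2 b] ha hb by simp
  hence "((k1 + k2) choose k1) * a ^ a * b ^ b \<le> (a + b) ^ (a + b)"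
    using binom_pow[of a b] by (meson le_trans mult_le_mono1)
  hence "C * real a ^ a * real b ^ b \<le> real (a + b) ^ (a + b)"
    unfolding C_def by (metis of_nat_le_iff of_nat_mult of_nat_power)
  hence "ln (C * real a ^ a * real b ^ b) \<le> ln (real (a + b) ^ (a + b))"
    using C1 apos bpos by (subst ln_le_cancel_iff) auto
  hence F1: "ln C + a * ln a + b * ln b \<le> (a + b) * ln (a + b)"
    using C1 apos bpos by (simp add: ln_mult ln_realpow)
  have F2': "a * ln a + b * ln b + min a b * ln 4 \<le> (a + b) * ln (real (a + b))"
  proof (cases "a \<le> b")
    case True
    then show ?thesis using key_ineq[of "real a" "real b"] apos by simp
  next
    case False
    then show ?thesis using key_ineq[of "real b" "real a"] bpos by (simp add: algebra_simps)
  qed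
  have M: "real m * ln 4 \<le> real (min a b) * ln 4"
    using ha hb unfolding m_def by (intro mult_right_mono) auto
  have F2: "a * ln a + b * ln b + m * ln 4 \<le> (a + b) * ln (real (a + b))"
    using F2' M by linarith
  have P: "(\<alpha> - 1) * (a * ln a + b * ln b + m * ln 4 - (a + b) * ln (real (a + b))) \<le> 0"
    using F2 assms(1) by (intro mult_nonneg_nonpos) auto
  have E: "ln C + \<alpha> * a * ln a + \<alpha> * b * ln b
      \<le> - (\<alpha> - 1) * m * ln 4 + \<alpha> * (a + b) * ln (real (a + b))"
    using P F1 by (simp add: algebra_simps)
  have "C * real a powr (\<alpha> * real a) * real b powr (\<alpha> * real b)
      = exp (ln C + \<alpha> * a * ln a + \<alpha> * b * ln b)"
    using C1 apos bpos by (simp add: powr_def exp_add mult.assoc)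
  also have "\<dots> \<le> exp (- (\<alpha> - 1) * m * ln 4 + \<alpha> * (a + b) * ln (real (a + b)))"
    using E by simp
  also have "\<dots> = 4 powr (- (\<alpha> - 1) * real m) * real (a + b) powr (\<alpha> * real (a + b))"
    using apos by (simp add: powr_def exp_add mult.assoc)
  finally show ?thesis
    unfolding Cfact[symmetric] a_def[symmetric] b_def[symmetric] m_def[symmetric] hN by simp
qed

end
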